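(* Let $\alpha,\beta\in\mathbb{C}$ be constants and $h,g:\mathbb{Z}^2\to\mathbb{C}$ satisfy $\widehat{h}-\widetilde{h}=\widetilde{\widetilde{g}}-g$ and $(h+\widetilde g)g=\beta^2-\alpha^2$. For $p$ in an open set, let $\varphi_1=\varphi_1(n,m;p)$, $\varphi_2=\varphi_2(n,m;p)$ be two linearly independent solutions of $$\widetilde{\widetilde{\varphi}}+h\,\widetilde{\varphi}+\alpha^2\varphi=p^2\varphi,\qquad \widehat{\varphi}=\widetilde{\varphi}-g\,\varphi,$$ depending differentiably on $p$, and write $\varphi_{\ell,p}=\partial\varphi_\ell/\partial p$. Let $s^2=\alpha^2-p^2$, $t^2=\beta^2-p^2$, and let $\rho$ be the constant with $\varphi_1\widetilde\varphi_2-\varphi_2\widetilde\varphi_1=\rho\,s^{2n}t^{2m}$. For constants $A,B,D$ define $$\chi=A\,x_{11}+B\,(x_{12}+x_{21})+D\,x_{22},\qquad x_{ij}=\varphi_i\widetilde{\varphi}_{j,p}-\widetilde{\varphi}_j\varphi_{i,p}\ (i,j=1,2).$$ Then $$s^4\chi\widehat{\chi}+\widetilde{\chi}\widehat{\widetilde{\chi}}-t^4\chi\widetilde{\chi}-\widehat{\chi}\widehat{\widetilde{\chi}}=(\alpha^2-\beta^2)\Big(\chi\widehat{\widetilde{\chi}}+\widetilde{\chi}\widehat{\chi}+4p^2\delta\,s^{4n}t^{4m}\Big),\qquad \delta=\rho^2(AD-B^2).$$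
   Context: Shift notation: for a function $f$ on $\mathbb{Z}^2$ (variables $n,m$), $\widetilde f(n,m)=f(n+1,m)$, $\widehat f(n,m)=f(n,m+1)$, and combined accents denote composed shifts; $h,g,\alpha,\beta$ do not depend on $p$. *)

theory Defs
  imports "HOL-Analysis.Analysis"
begin

text \<open>Shift notation: for f on Z^2, tilde f (n,m) = f (n+1,m), hat f (n,m) = f (n,m+1).
  Solutions are written as functions phi n m p.\<close>

definition xfun :: "(int \<Rightarrow> int \<Rightarrow> complex \<Rightarrow> complex) \<Rightarrow> (int \<Rightarrow> int \<Rightarrow> complex \<Rightarrow> complex)
                     \<Rightarrow> int \<Rightarrow> int \<Rightarrow> complex \<Rightarrow> complex" where
  "xfun phii phij n m p =
     phii n m p * deriv (\<lambda>q. phij (n + 1) m q) p - phij (n + 1) m p * deriv (\<lambda>q. phii n m q) p"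

definition chi :: "complex \<Rightarrow> complex \<Rightarrow> complex \<Rightarrow> (int \<Rightarrow> int \<Rightarrow> complex \<Rightarrow> complex)
                    \<Rightarrow> (int \<Rightarrow> int \<Rightarrow> complex \<Rightarrow> complex) \<Rightarrow> int \<Rightarrow> int \<Rightarrow> complex \<Rightarrow> complex" where
  "chi A B D phi1 phi2 n m p =
     A * xfun phi1 phi1 n m p + B * (xfun phi1 phi2 n m p + xfun phi2 phi1 n m p)
     + D * xfun phi2 phi2 n m p"

definition solves :: "(int \<Rightarrow> int \<Rightarrow> complex) \<Rightarrow> (int \<Rightarrow> int \<Rightarrow> complex) \<Rightarrow> complex \<Rightarrow> complex
                      \<Rightarrow> (int \<Rightarrow> int \<Rightarrow> complex) \<Rightarrow> bool" where
  "solves h g \<alpha> p phi \<longleftrightarrow>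
     (\<forall>n m. phi (n + 2) m + h n m * phi (n + 1) m + \<alpha>^2 * phi n m = p^2 * phi n m
          \<and> phi n (m + 1) = phi (n + 1) m - g n m * phi n m)"

definition lin_indep2 :: "(int \<Rightarrow> int \<Rightarrow> complex) \<Rightarrow> (int \<Rightarrow> int \<Rightarrow> complex) \<Rightarrow> bool" where
  "lin_indep2 f1 f2 \<longleftrightarrow>
     (\<forall>a b :: complex. (\<forall>n m. a * f1 n m + b * f2 n m = 0) \<longrightarrow> a = 0 \<and> b = 0)"

end

theory Submission
  imports Defs
begin

lemma shift_facts:
  fixes f :: "int \<Rightarrow> int \<Rightarrow> complex \<Rightarrow> complex"
  assumes U: "open U" "p \<in> U"
    and sol: "\<And>q. q \<in> U \<Longrightarrow> solves h g \<alpha> q (\<lambda>n m. f n m q)"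
    and hol: "\<And>n m. (\<lambda>q. f n m q) holomorphic_on U"
  shows "f (n + 1 + 1) m p = (p^2 - \<alpha>^2) * f n m p - h n m * f (n + 1) m p"
    and "deriv (\<lambda>q. f (n + 1 + 1) m q) p = (p^2 - \<alpha>^2) * deriv (\<lambda>q. f n m q) p
            + 2 * p * f n m p - h n m * deriv (\<lambda>q. f (n + 1) m q) p"
    and "f n (m + 1) p = f (n + 1) m p - g n m * f n m p"
    and "deriv (\<lambda>q. f n (m + 1) q) p = deriv (\<lambda>q. f (n + 1) m q) p - g n m * deriv (\<lambda>q. f n m q) p"
proof -
  have e1: "\<And>q. q \<in> U \<Longrightarrow> f (n + 1 + 1) m q = (q^2 - \<alpha>^2) * f n m q - h n m * f (n + 1) m q"
  proof -
    fix q assume "q \<in> U"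
    from sol[OF this] have "f (n + 2) m q + h n m * f (n + 1) m q + \<alpha>^2 * f n m q = q^2 * f n m q"
      unfolding solves_def by blast
    moreover have "n + 1 + 1 = n + 2" by simp
    ultimately show "f (n + 1 + 1) m q = (q^2 - \<alpha>^2) * f n m q - h n m * f (n + 1) m q"
      by (simp add: algebra_simps)
  qed
  have e2: "\<And>q. q \<in> U \<Longrightarrow> f n (m + 1) q = f (n + 1) m q - g n m * f n m q"
    using sol unfolding solves_def by blast
  have d: "\<And>n m. ((\<lambda>q. f n m q) has_field_derivative deriv (\<lambda>q. f n m q) p) (at p)"
    using holomorphic_derivI[OF hol U] by blast
  show "f (n + 1 + 1) m p = (p^2 - \<alpha>^2) * f n m p - h n m * f (n + 1) m p"
    using e1 U by blast
  show "f n (m + 1) p = f (n + 1) m p - g n m * f n m p" using e2 U by blast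
  have "((\<lambda>q. (q^2 - \<alpha>^2) * f n m q - h n m * f (n + 1) m q) has_field_derivative
     ((p^2 - \<alpha>^2) * deriv (\<lambda>q. f n m q) p
            + 2 * p * f n m p - h n m * deriv (\<lambda>q. f (n + 1) m q) p)) (at p)"
    by (auto intro!: derivative_eq_intros d simp: algebra_simps)
  then have "((\<lambda>q. f (n + 1 + 1) m q) has_field_derivative
     ((p^2 - \<alpha>^2) * deriv (\<lambda>q. f n m q) p
            + 2 * p * f n m p - h n m * deriv (\<lambda>q. f (n + 1) m q) p)) (at p)"
    by (rule has_field_derivative_transform_within_open[OF _ U]) (metis e1)
  then show "deriv (\<lambda>q. f (n + 1 + 1) m q) p = (p^2 - \<alpha>^2) * deriv (\<lambda>q. f n m q) p
            + 2 * p * f n m p - h n m * deriv (\<lambda>q. f (n + 1) m q) p"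
    by (rule DERIV_imp_deriv)
  have "((\<lambda>q. f (n + 1) m q - g n m * f n m q) has_field_derivative
     (deriv (\<lambda>q. f (n + 1) m q) p - g n m * deriv (\<lambda>q. f n m q) p)) (at p)"
    by (auto intro!: derivative_eq_intros d)
  then have "((\<lambda>q. f n (m + 1) q) has_field_derivative
     (deriv (\<lambda>q. f (n + 1) m q) p - g n m * deriv (\<lambda>q. f n m q) p)) (at p)"
    by (rule has_field_derivative_transform_within_open[OF _ U]) (metis e2)
  then show "deriv (\<lambda>q. f n (m + 1) q) p = deriv (\<lambda>q. f (n + 1) m q) p - g n m * deriv (\<lambda>q. f n m q) p"
    by (rule DERIV_imp_deriv)
qed

definition Fb :: "complex \<Rightarrow> complex \<Rightarrow> complex \<Rightarrow> complex \<Rightarrow> complex \<Rightarrow> complex \<Rightarrow> complex \<Rightarrow> complex" where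
  "Fb A B D x1 x2 y1 y2 = A * x1 * y1 + B * (x1 * y2 + x2 * y1) + D * x2 * y2"

lemma final_alg:
  fixes c Q P R g k s2 e p W A B D :: complex
  assumes gk: "g * k = - e"
    and c1: "c1 = s2 * c + 2 * p * Q"
    and c2: "c2 = (s2 - e) * c + 2 * p * (Q - g * P)"
    and Qh: "Qh = - k * R - (s2 + e) * Q + g * s2 * P"
    and c3: "c3 = s2 * c2 + 2 * p * Qh"
    and det: "P * R - Q^2 = (A * D - B^2) * W^2"
  shows "s2^2 * c * c2 + c1 * c3 - (s2 - e)^2 * c * c1 - c2 * c3
     = e * (c * c3 + c1 * c2 + 4 * p^2 * ((A * D - B^2) * W^2))"
proof -
  have e: "e = - (g * k)" using gk by simp
  show ?thesis unfolding c3 Qh c1 c2 det[symmetric] e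
    by algebra
qed

context
  fixes \<alpha> \<beta> A B D p :: complex
    and h g :: "int \<Rightarrow> int \<Rightarrow> complex"
    and phi1 phi2 :: "int \<Rightarrow> int \<Rightarrow> complex \<Rightarrow> complex"
    and U :: "complex set"
  assumes hg2: "\<And>n m. (h n m + g (n + 1) m) * g n m = \<beta>^2 - \<alpha>^2"
    and U_open: "open U"
    and pU: "p \<in> U"
    and sol1: "\<And>q. q \<in> U \<Longrightarrow> solves h g \<alpha> q (\<lambda>n m. phi1 n m q)"
    and sol2: "\<And>q. q \<in> U \<Longrightarrow> solves h g \<alpha> q (\<lambda>n m. phi2 n m q)"
    and diff1: "\<And>n m. (\<lambda>q. phi1 n m q) holomorphic_on U"
    and diff2: "\<And>n m. (\<lambda>q. phi2 n m q) holomorphic_on U"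
begin

lemma Urefl: "\<And>q. q \<in> U \<Longrightarrow> q \<in> U" by simp

lemmas S1 = shift_facts[OF U_open pU sol1 diff1, OF Urefl]
lemmas S2 = shift_facts[OF U_open pU sol2 diff2, OF Urefl]

lemma chi_n:
  "chi A B D phi1 phi2 (n + 1) m p = (\<alpha>^2 - p^2) * chi A B D phi1 phi2 n m p
     + 2 * p * Fb A B D (phi1 n m p) (phi2 n m p) (phi1 (n + 1) m p) (phi2 (n + 1) m p)"
  apply (simp only: chi_def xfun_def Fb_def S1(1,2)[of n m] S2(1,2)[of n m])
  by algebra

lemma chi_m:
  "chi A B D phi1 phi2 n (m + 1) p = (\<beta>^2 - p^2) * chi A B D phi1 phi2 n m p
     + 2 * p * (Fb A B D (phi1 n m p) (phi2 n m p) (phi1 (n + 1) m p) (phi2 (n + 1) m p)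
        - g n m * Fb A B D (phi1 n m p) (phi2 n m p) (phi1 n m p) (phi2 n m p))"
  apply (simp only: chi_def xfun_def Fb_def S1(3,4)[of n m] S2(3,4)[of n m]
    S1(3,4)[of "n + 1" m] S2(3,4)[of "n + 1" m] S1(1,2)[of n m] S2(1,2)[of n m])
  using hg2[of n m] by algebra

lemma Q_m:
  "Fb A B D (phi1 n (m + 1) p) (phi2 n (m + 1) p) (phi1 (n + 1) (m + 1) p) (phi2 (n + 1) (m + 1) p)
   = - (h n m + g (n + 1) m) * Fb A B D (phi1 (n + 1) m p) (phi2 (n + 1) m p) (phi1 (n + 1) m p) (phi2 (n + 1) m p)
     - ((\<alpha>^2 - p^2) + (\<alpha>^2 - \<beta>^2)) * Fb A B D (phi1 n m p) (phi2 n m p) (phi1 (n + 1) m p) (phi2 (n + 1) m p)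
     + g n m * (\<alpha>^2 - p^2) * Fb A B D (phi1 n m p) (phi2 n m p) (phi1 n m p) (phi2 n m p)"
  apply (simp only: Fb_def S1(3)[of n m] S2(3)[of n m]
    S1(3)[of "n + 1" m] S2(3)[of "n + 1" m] S1(1)[of n m] S2(1)[of n m])
  using hg2[of n m] by algebra

end

theorem proposition4p3:
  fixes \<alpha> \<beta> A B D p :: complex
    and h g :: "int \<Rightarrow> int \<Rightarrow> complex"
    and phi1 phi2 :: "int \<Rightarrow> int \<Rightarrow> complex \<Rightarrow> complex"
    and \<rho> :: "complex \<Rightarrow> complex"
    and U :: "complex set"
  assumes hg1: "\<And>n m. h n (m + 1) - h (n + 1) m = g (n + 2) m - g n m"
    and hg2: "\<And>n m. (h n m + g (n + 1) m) * g n m = \<beta>^2 - \<alpha>^2"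
    and U_open: "open U"
    and pU: "p \<in> U"
    and sol1: "\<And>q. q \<in> U \<Longrightarrow> solves h g \<alpha> q (\<lambda>n m. phi1 n m q)"
    and sol2: "\<And>q. q \<in> U \<Longrightarrow> solves h g \<alpha> q (\<lambda>n m. phi2 n m q)"
    and indep: "\<And>q. q \<in> U \<Longrightarrow> lin_indep2 (\<lambda>n m. phi1 n m q) (\<lambda>n m. phi2 n m q)"
    and diff1: "\<And>n m. (\<lambda>q. phi1 n m q) holomorphic_on U"
    and diff2: "\<And>n m. (\<lambda>q. phi2 n m q) holomorphic_on U"
    and wron: "\<And>n m q. q \<in> U \<Longrightarrow>
       phi1 n m q * phi2 (n + 1) m q - phi2 n m q * phi1 (n + 1) m q
         = \<rho> q * (\<alpha>^2 - q^2) powi n * (\<beta>^2 - q^2) powi m"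
  shows "\<And>n m.
    (let X = chi A B D phi1 phi2;
         s2 = \<alpha>^2 - p^2; t2 = \<beta>^2 - p^2;
         \<delta> = (\<rho> p)^2 * (A * D - B^2)
     in s2^2 * X n m p * X n (m + 1) p + X (n + 1) m p * X (n + 1) (m + 1) p
        - t2^2 * X n m p * X (n + 1) m p - X n (m + 1) p * X (n + 1) (m + 1) p
      = (\<alpha>^2 - \<beta>^2) * (X n m p * X (n + 1) (m + 1) p + X (n + 1) m p * X n (m + 1) p
          + 4 * p^2 * \<delta> * (s2 powi n)^2 * (t2 powi m)^2))"
proof -
  fix n m
  define X where "X = chi A B D phi1 phi2"
  define s2 where "s2 = \<alpha>^2 - p^2"
  define t2 where "t2 = \<beta>^2 - p^2"
  define e where "e = \<alpha>^2 - \<beta>^2"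
  define P where "P = Fb A B D (phi1 n m p) (phi2 n m p) (phi1 n m p) (phi2 n m p)"
  define Q where "Q = Fb A B D (phi1 n m p) (phi2 n m p) (phi1 (n + 1) m p) (phi2 (n + 1) m p)"
  define R where "R = Fb A B D (phi1 (n + 1) m p) (phi2 (n + 1) m p) (phi1 (n + 1) m p) (phi2 (n + 1) m p)"
  define Qh where "Qh = Fb A B D (phi1 n (m + 1) p) (phi2 n (m + 1) p) (phi1 (n + 1) (m + 1) p) (phi2 (n + 1) (m + 1) p)"
  define W where "W = phi1 n m p * phi2 (n + 1) m p - phi2 n m p * phi1 (n + 1) m p"
  define k where "k = h n m + g (n + 1) m"
  have gk: "g n m * k = - e" using hg2[of n m] unfolding k_def e_def by (simp add: algebra_simps)
  have c1: "X (n + 1) m p = s2 * X n m p + 2 * p * Q"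
    unfolding X_def s2_def Q_def
    by (rule chi_n) (fact hg2 U_open pU sol1 sol2 diff1 diff2)+
  have c3: "X (n + 1) (m + 1) p = s2 * X n (m + 1) p + 2 * p * Qh"
    unfolding X_def s2_def Qh_def
    by (rule chi_n) (fact hg2 U_open pU sol1 sol2 diff1 diff2)+
  have c2': "X n (m + 1) p = t2 * X n m p + 2 * p * (Q - g n m * P)"
    unfolding X_def t2_def Q_def P_def
    by (rule chi_m) (fact hg2 U_open pU sol1 sol2 diff1 diff2)+
  have t2e: "t2 = s2 - e" unfolding t2_def s2_def e_def by simp
  have c2: "X n (m + 1) p = (s2 - e) * X n m p + 2 * p * (Q - g n m * P)"
    using c2' t2e by simp
  have Qh': "Qh = - k * R - (s2 + e) * Q + g n m * s2 * P"
    unfolding Qh_def k_def R_def s2_def e_def Q_def P_def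
    by (rule Q_m) (fact hg2 U_open pU sol1 sol2 diff1 diff2)+
  have det: "P * R - Q^2 = (A * D - B^2) * W^2"
    unfolding P_def Q_def R_def W_def Fb_def by algebra
  have key: "s2^2 * X n m p * X n (m + 1) p + X (n + 1) m p * X (n + 1) (m + 1) p
      - (s2 - e)^2 * X n m p * X (n + 1) m p - X n (m + 1) p * X (n + 1) (m + 1) p
     = e * (X n m p * X (n + 1) (m + 1) p + X (n + 1) m p * X n (m + 1) p
       + 4 * p^2 * ((A * D - B^2) * W^2))"
    by (rule final_alg[OF gk c1 c2 Qh' c3 det])
  have Weq: "W = \<rho> p * s2 powi n * t2 powi m"
    unfolding W_def s2_def t2_def using wron[OF pU] .
  have dW: "(A * D - B^2) * W^2 = ((\<rho> p)^2 * (A * D - B^2)) * (s2 powi n)^2 * (t2 powi m)^2"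
    unfolding Weq by (simp add: power_mult_distrib)
  show "?thesis n m"
    using key unfolding Let_def X_def[symmetric] s2_def[symmetric] t2_def[symmetric] t2e[symmetric]
      e_def[symmetric] dW
    by (simp add: e_def mult.assoc)
qed

end
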